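(* Both drift-plus-penalty (DPP) scheduling algorithms described in the context (the one for average AoI minimization and the one for average peak-AoI minimization) guarantee that the data queue at node $S_1$ is strongly stable. The queue backlog $Q(t)$ of $S_1$ satisfies \[ \limsup_{t\rightarrow \infty} \frac{1}{t}\sum_{\tau=0}^{t-1}\mathbb{E}[Q(\tau)]\leq \frac{C+V}{\epsilon}. \] This inequality holds for any value of $\epsilon$ bounded by $0\leq \epsilon\leq \min\{p_{1/1}-\lambda, \delta\cdot p_{2/1,2}\}$. Here, $C=\frac{\lambda^2+1}{2}$ for the AoI-minimization algorithm and $C=\frac{\alpha_{\max}^2+\lambda^2+2}{2}$ for the peak-AoI-minimization algorithm, and $V$ is a constant weight that affects the tradeoff between performance optimization and queue congestion.
   Context: Time-slotted multiple access channel: two source nodes transmit to a common destination. Node $S_1$ is grid-connected; data packets arrive at its infinite queue as a Bernoulli process $a_1(t)$ with probability $\lambda$, and $Q(t+1)=\max[Q(t)-b_1(t),0]+a_1(t)$, where $b_1(t)=1$ iff a packet of $S_1$ is successfully received in slot $t$. Node $S_2$ is an energy-harvesting sensor: energy arrivals $a_2(t)$ are Bernoulli with probability $\delta$, battery $B(t+1)=\max[B(t)-u_2(t),0]+a_2(t)$, each transmission uses one energy unit, and $H(t)=\mathds{1}\{B(t)>0\}$ (indicator that the battery is non-empty). Scheduling decision $\mathbf{U}(t)=(u_1(t),u_2(t))\in\{(1,1),(1,0),(0,1),(0,0)\}$. Success probabilities: $p_{i/i}$ when only $S_i$ transmits, $p_{i/i,j}$ when both transmit. Conditional success probabilities: $p_1(t)=p_{1/1,2}$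 if $\mathbf{U}(t)=(1,1)$, $p_{1/1}$ if $(1,0)$, $0$ otherwise; $p_2(t)=p_{2/1,2}$ if $(1,1)$, $p_{2/2}$ if $(0,1)$, $0$ otherwise; $b_i(t)$ is the success indicator of $S_i$ given $\mathbf{U}(t)$. The AoI of $S_2$ evolves as $A(t+1)=A(t)+1-H(t)b_2(t)A(t)$. The problem is assumed feasible, $\lambda<p_{1/1}$. AoI-minimization DPP algorithm: in each slot $t$, observe $Q(t),A(t),H(t)$ and choose $\mathbf{U}(t)$ maximizing $p_1(t)Q(t)+V p_2(t)H(t)A(t)$, with $V>0$ a constant penalty weight; then update $Q,B,A$. Peak-AoI-minimization DPP algorithm: with constants $\alpha_{\max}$ (sufficiently large) and $V$, and a virtual queue $Z(t+1)=\max[Z(t)+\alpha(t)-H(t)b_2(t),0]$, $Z(0)=0$: in each slot observe $Q(t),Z(t),H(t)$ and choose $\mathbf{U}(t)$ maximizing $Z(t)H(t)p_2(t)+Q(t)p_1(t)$; set the auxiliary variable $\alpha(t)=\alpha_{\max}$ if $Z(t)\le V$ and $\alpha(t)=0$ otherwise; then update $Q,B,Z$. Both start from $Q(0)=0$, $B(0)=0$. *)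

theory Defs
  imports "HOL-Probability.Probability"
begin

text \<open>Two-source multiple access channel.  A scheduling decision is a pair
  (u1, u2) of booleans: u_i = True iff S_i transmits.\<close>

type_synonym decision = "bool \<times> bool"

text \<open>Conditional success probabilities p_1(t), p_2(t) as functions of U(t).
  p11 = p_{1/1}, p22 = p_{2/2}, p112 = p_{1/1,2}, p212 = p_{2/1,2}.\<close>

definition succ1 :: "real \<Rightarrow> real \<Rightarrow> decision \<Rightarrow> real" where
  "succ1 p11 p112 U = (case U of (True, True) \<Rightarrow> p112 | (True, False) \<Rightarrow> p11 | _ \<Rightarrow> 0)"

definition succ2 :: "real \<Rightarrow> real \<Rightarrow> decision \<Rightarrow> real" where
  "succ2 p22 p212 U = (case U of (True, True) \<Rightarrow> p212 | (False, True) \<Rightarrow> p22 | _ \<Rightarrow> 0)"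

text \<open>When both nodes
  transmit, the joint law is an arbitrary pmf J whose marginals are p_{1/1,2}
  and p_{2/1,2} (the paper only specifies the marginals).\<close>

definition succ_pmf :: "real \<Rightarrow> real \<Rightarrow> (bool \<times> bool) pmf \<Rightarrow> decision \<Rightarrow> (bool \<times> bool) pmf" where
  "succ_pmf p11 p22 J U = (case U of
      (True, True) \<Rightarrow> J
    | (True, False) \<Rightarrow> map_pmf (\<lambda>b. (b, False)) (bernoulli_pmf p11)
    | (False, True) \<Rightarrow> map_pmf (\<lambda>b. (False, b)) (bernoulli_pmf p22)
    | (False, False) \<Rightarrow> return_pmf (False, False))"

definition ind :: "bool \<Rightarrow> nat" where
  "ind b = (if b then 1 else 0)"

definition aoi_obs :: "nat \<times> nat \<times> nat \<Rightarrow> nat \<times> nat \<times> bool" where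
  "aoi_obs s = (case s of (Q, B, A) \<Rightarrow> (Q, A, B > 0))"

definition aoi_obj :: "real \<Rightarrow> real \<Rightarrow> real \<Rightarrow> real \<Rightarrow> real \<Rightarrow> nat \<times> nat \<times> bool \<Rightarrow> decision \<Rightarrow> real" where
  "aoi_obj V p11 p22 p112 p212 obs U = (case obs of (Q, A, H) \<Rightarrow>
     succ1 p11 p112 U * real Q + V * succ2 p22 p212 U * (if H then 1 else 0) * real A)"

definition aoi_step :: "real \<Rightarrow> real \<Rightarrow> real \<Rightarrow> real \<Rightarrow> (bool \<times> bool) pmf \<Rightarrow> decision
    \<Rightarrow> nat \<times> nat \<times> nat \<Rightarrow> (nat \<times> nat \<times> nat) pmf" where
  "aoi_step lam \<delta> p11 p22 J U s = (case s of (Q, B, A) \<Rightarrow>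
     do { a1 \<leftarrow> bernoulli_pmf lam;
          a2 \<leftarrow> bernoulli_pmf \<delta>;
          bb \<leftarrow> succ_pmf p11 p22 J U;
          let H = (B > 0);
          return_pmf ((Q - ind (fst bb)) + ind a1,
                      (B - ind (snd U)) + ind a2,
                      (if H \<and> snd bb then 1 else A + 1)) })"

text \<open>Distribution of the state (Q(t), B(t), A(t)) under a (possibly time-dependent
  tie-breaking) scheduling rule pol mapping the observation to U(t).\<close>
primrec aoi_dist :: "real \<Rightarrow> real \<Rightarrow> real \<Rightarrow> real \<Rightarrow> (bool \<times> bool) pmf
    \<Rightarrow> (nat \<Rightarrow> nat \<times> nat \<times> bool \<Rightarrow> decision) \<Rightarrow> nat \<Rightarrow> nat \<Rightarrow> (nat \<times> nat \<times> nat) pmf" where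
  "aoi_dist lam \<delta> p11 p22 J pol A0 0 = return_pmf (0, 0, A0)"
| "aoi_dist lam \<delta> p11 p22 J pol A0 (Suc t) =
     bind_pmf (aoi_dist lam \<delta> p11 p22 J pol A0 t)
       (\<lambda>s. aoi_step lam \<delta> p11 p22 J (pol t (aoi_obs s)) s)"

definition peak_obs :: "nat \<times> nat \<times> real \<Rightarrow> nat \<times> real \<times> bool" where
  "peak_obs s = (case s of (Q, B, Z) \<Rightarrow> (Q, Z, B > 0))"

definition peak_obj :: "real \<Rightarrow> real \<Rightarrow> real \<Rightarrow> real \<Rightarrow> nat \<times> real \<times> bool \<Rightarrow> decision \<Rightarrow> real" where
  "peak_obj p11 p22 p112 p212 obs U = (case obs of (Q, Z, H) \<Rightarrow>
     Z * (if H then 1 else 0) * succ2 p22 p212 U + real Q * succ1 p11 p112 U)"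

definition peak_step :: "real \<Rightarrow> real \<Rightarrow> real \<Rightarrow> real \<Rightarrow> real \<Rightarrow> real \<Rightarrow> (bool \<times> bool) pmf
    \<Rightarrow> decision \<Rightarrow> nat \<times> nat \<times> real \<Rightarrow> (nat \<times> nat \<times> real) pmf" where
  "peak_step amax V lam \<delta> p11 p22 J U s = (case s of (Q, B, Z) \<Rightarrow>
     do { a1 \<leftarrow> bernoulli_pmf lam;
          a2 \<leftarrow> bernoulli_pmf \<delta>;
          bb \<leftarrow> succ_pmf p11 p22 J U;
          let H = (B > 0);
          let \<alpha> = (if Z \<le> V then amax else 0);
          return_pmf ((Q - ind (fst bb)) + ind a1,
                      (B - ind (snd U)) + ind a2,
                      max (Z + \<alpha> - (if H \<and> snd bb then 1 else 0)) 0) })"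

primrec peak_dist :: "real \<Rightarrow> real \<Rightarrow> real \<Rightarrow> real \<Rightarrow> real \<Rightarrow> real \<Rightarrow> (bool \<times> bool) pmf
    \<Rightarrow> (nat \<Rightarrow> nat \<times> real \<times> bool \<Rightarrow> decision) \<Rightarrow> nat \<Rightarrow> (nat \<times> nat \<times> real) pmf" where
  "peak_dist amax V lam \<delta> p11 p22 J pol 0 = return_pmf (0, 0, 0)"
| "peak_dist amax V lam \<delta> p11 p22 J pol (Suc t) =
     bind_pmf (peak_dist amax V lam \<delta> p11 p22 J pol t)
       (\<lambda>s. peak_step amax V lam \<delta> p11 p22 J (pol t (peak_obs s)) s)"

definition EQ :: "(nat \<times> 'c) pmf \<Rightarrow> real" where
  "EQ D = measure_pmf.expectation D (\<lambda>s. real (fst s))"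

end

theory Submission
  imports Defs
begin


lemma exp_bind_fin:
  fixes f :: "'b \<Rightarrow> real"
  assumes T: "finite (set_pmf p)" and K: "\<And>x. x \<in> set_pmf p \<Longrightarrow> finite (set_pmf (K x))"
  shows "measure_pmf.expectation (bind_pmf p K) f = measure_pmf.expectation p (\<lambda>x. measure_pmf.expectation (K x) f)"
proof -
  define S where "S = (\<Union>x\<in>set_pmf p. set_pmf (K x))"
  have S: "finite S" using T K unfolding S_def by auto
  have "measure_pmf.expectation (bind_pmf p K) f = (\<Sum>y\<in>S. f y * pmf (bind_pmf p K) y)"
    by (rule integral_measure_pmf_real) (use S in \<open>auto simp: S_def\<close>)
  also have "\<dots> = (\<Sum>y\<in>S. f y * (\<Sum>x\<in>set_pmf p. pmf (K x) y * pmf p x))"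
    unfolding pmf_bind
    by (intro sum.cong refl arg_cong2[where f="(*)"] integral_measure_pmf_real T) auto
  also have "\<dots> = (\<Sum>x\<in>set_pmf p. (\<Sum>y\<in>S. f y * pmf (K x) y) * pmf p x)"
    by (simp add: sum_distrib_left sum_distrib_right mult_ac sum.swap[of _ S])
  also have "\<dots> = (\<Sum>x\<in>set_pmf p. measure_pmf.expectation (K x) f * pmf p x)"
  proof (intro sum.cong refl arg_cong2[where f="(*)"])
    fix x assume x: "x \<in> set_pmf p"
    show "(\<Sum>y\<in>S. f y * pmf (K x) y) = measure_pmf.expectation (K x) f"
      by (rule integral_measure_pmf_real[symmetric]) (use S x in \<open>auto simp: S_def\<close>)
  qed
  also have "\<dots> = measure_pmf.expectation p (\<lambda>x. measure_pmf.expectation (K x) f)"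
    by (rule integral_measure_pmf_real[symmetric]) (use T in auto)
  finally show ?thesis .
qed



lemma fin_bb: "finite (set_pmf (X :: (bool \<times> bool) pmf))"
  by (rule finite_subset[OF subset_UNIV]) simp
lemma fin_b: "finite (set_pmf (X :: bool pmf))"
  by (rule finite_subset[OF subset_UNIV]) simp

lemma fin_aoi_step: "finite (set_pmf (aoi_step lam \<delta> p11 p22 J U s))"
  by (auto simp: aoi_step_def Let_def fin_bb fin_b split: prod.splits)

lemma fin_peak_step: "finite (set_pmf (peak_step amax V lam \<delta> p11 p22 J U s))"
  by (auto simp: peak_step_def Let_def fin_bb fin_b split: prod.splits)

lemma map_fst_J:
  assumes "measure_pmf.prob J {bb. fst bb} = p"
  shows "map_pmf fst J = bernoulli_pmf p"
proof (rule pmf_eqI)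
  fix b :: bool
  have p: "0 \<le> p" "p \<le> 1" using assms measure_nonneg[of J] by auto
  have "pmf (map_pmf fst J) True = p" using assms by (simp add: pmf_map vimage_def)
  moreover have "pmf (map_pmf fst J) False = 1 - p"
  proof -
    have "pmf (map_pmf fst J) False = measure_pmf.prob J (- {bb. fst bb})"
      by (simp add: pmf_map vimage_def Compl_eq)
    also have "\<dots> = 1 - p" using measure_pmf.prob_compl[of "{bb. fst bb}" J] assms by (simp add: Compl_eq_Diff_UNIV)
    finally show ?thesis .
  qed
  ultimately show "pmf (map_pmf fst J) b = pmf (bernoulli_pmf p) b"
    using p by (cases b) auto
qed



lemma map_bool_J:
  fixes g :: "'a \<Rightarrow> bool"
  assumes "measure_pmf.prob J {bb. g bb} = p"
  shows "map_pmf g J = bernoulli_pmf p"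
proof (rule pmf_eqI)
  fix b :: bool
  have p: "0 \<le> p" "p \<le> 1" using assms measure_nonneg[of J] by auto
  have "pmf (map_pmf g J) True = p" using assms by (simp add: pmf_map vimage_def)
  moreover have "pmf (map_pmf g J) False = 1 - p"
  proof -
    have "pmf (map_pmf g J) False = measure_pmf.prob J (- {bb. g bb})"
      by (simp add: pmf_map vimage_def Compl_eq)
    also have "\<dots> = 1 - p" using measure_pmf.prob_compl[of "{bb. g bb}" J] assms by (simp add: Compl_eq_Diff_UNIV)
    finally show ?thesis .
  qed
  ultimately show "pmf (map_pmf g J) b = pmf (bernoulli_pmf p) b"
    using p by (cases b) auto
qed

lemma bern0: "bernoulli_pmf 0 = return_pmf False"
  by (rule pmf_eqI) (case_tac i, auto simp: pmf_return)

lemma succ1_range: "0 \<le> p11 \<Longrightarrow> p11 \<le> 1 \<Longrightarrow> 0 \<le> p112 \<Longrightarrow> p112 \<le> 1 \<Longrightarrow>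
   0 \<le> succ1 p11 p112 U \<and> succ1 p11 p112 U \<le> 1"
  by (auto simp: succ1_def split: bool.splits prod.splits)
lemma succ2_range: "0 \<le> p22 \<Longrightarrow> p22 \<le> 1 \<Longrightarrow> 0 \<le> p212 \<Longrightarrow> p212 \<le> 1 \<Longrightarrow>
   0 \<le> succ2 p22 p212 U \<and> succ2 p22 p212 U \<le> 1"
  by (auto simp: succ2_def split: bool.splits prod.splits)

lemma succ_fst:
  assumes "0 \<le> p11" "p11 \<le> 1" "measure_pmf.prob J {bb. fst bb} = p112"
  shows "map_pmf fst (succ_pmf p11 p22 J U) = bernoulli_pmf (succ1 p11 p112 U)"
  using assms map_bool_J[OF assms(3)]
  by (cases U) (auto simp: succ_pmf_def succ1_def map_pmf_comp bern0 split: bool.splits)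

lemma succ_snd:
  assumes "0 \<le> p22" "p22 \<le> 1" "measure_pmf.prob J {bb. snd bb} = p212"
  shows "map_pmf snd (succ_pmf p11 p22 J U) = bernoulli_pmf (succ2 p22 p212 U)"
  using assms map_bool_J[OF assms(3)]
  by (cases U) (auto simp: succ_pmf_def succ2_def map_pmf_comp bern0 split: bool.splits)

lemma succ_fst_exp:
  assumes "0 \<le> p11" "p11 \<le> 1" "measure_pmf.prob J {bb. fst bb} = p112"
  shows "measure_pmf.expectation (succ_pmf p11 p22 J U) (\<lambda>x. h (fst x)) = 
     h True * succ1 p11 p112 U + h False * (1 - succ1 p11 p112 U)"
proof -
  have "measure_pmf.expectation (succ_pmf p11 p22 J U) (\<lambda>x. h (fst x)) =
     measure_pmf.expectation (map_pmf fst (succ_pmf p11 p22 J U)) h" by simp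
  also have "\<dots> = measure_pmf.expectation (bernoulli_pmf (succ1 p11 p112 U)) h"
    using succ_fst[OF assms] by simp
  also have "\<dots> = h True * succ1 p11 p112 U + h False * (1 - succ1 p11 p112 U)"
    using succ1_range[OF assms(1,2), of p112 U] assms measure_nonneg[of J "{bb. fst bb}"]
      measure_pmf.prob_le_1[of J "{bb. fst bb}"] by (subst integral_bernoulli_pmf) auto
  finally show ?thesis .
qed

lemma succ_snd_exp:
  assumes "0 \<le> p22" "p22 \<le> 1" "measure_pmf.prob J {bb. snd bb} = p212"
  shows "measure_pmf.expectation (succ_pmf p11 p22 J U) (\<lambda>x. h (snd x)) = 
     h True * succ2 p22 p212 U + h False * (1 - succ2 p22 p212 U)"
proof -
  have "measure_pmf.expectation (succ_pmf p11 p22 J U) (\<lambda>x. h (snd x)) =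
     measure_pmf.expectation (map_pmf snd (succ_pmf p11 p22 J U)) h" by simp
  also have "\<dots> = measure_pmf.expectation (bernoulli_pmf (succ2 p22 p212 U)) h"
    using succ_snd[OF assms] by simp
  also have "\<dots> = h True * succ2 p22 p212 U + h False * (1 - succ2 p22 p212 U)"
    using succ2_range[OF assms(1,2), of p212 U] assms measure_nonneg[of J "{bb. snd bb}"]
      measure_pmf.prob_le_1[of J "{bb. snd bb}"] by (subst integral_bernoulli_pmf) auto
  finally show ?thesis .
qed

lemma qbound:
  fixes Q :: nat and P lam :: real
  assumes "0 \<le> P" "P \<le> 1" "0 \<le> lam" "lam \<le> 1"
  shows "((real (Q - ind True) + real (ind True))\<^sup>2 * P +
      (real (Q - ind False) + real (ind True))\<^sup>2 * (1 - P)) * lam +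
     ((real (Q - ind True) + real (ind False))\<^sup>2 * P +
      (real (Q - ind False) + real (ind False))\<^sup>2 * (1 - P)) * (1 - lam)
    \<le> real Q ^ 2 + 1 + 2 * real Q * (lam - P)"
proof (cases "Q = 0")
  case True
  then show ?thesis using assms by (simp add: ind_def algebra_simps)
next
  case False
  then have "real (Q - 1) = real Q - 1" by simp
  then have e: "((real (Q - ind True) + real (ind True))\<^sup>2 * P +
      (real (Q - ind False) + real (ind True))\<^sup>2 * (1 - P)) * lam +
     ((real (Q - ind True) + real (ind False))\<^sup>2 * P +
      (real (Q - ind False) + real (ind False))\<^sup>2 * (1 - P)) * (1 - lam)
     = real Q ^ 2 + 2 * real Q * (lam - P) + (lam + P - 2 * lam * P)"
    by (simp add: ind_def power2_eq_square algebra_simps)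
  have "0 \<le> (1 - lam) * (1 - P)" "0 \<le> lam * P" using assms by simp_all
  then have "lam + P - 2 * lam * P \<le> 1" by (simp add: algebra_simps)
  then show ?thesis unfolding e by simp
qed

lemma aoi_Q2:
  assumes "0 \<le> lam" "lam \<le> 1" "0 \<le> \<delta>" "\<delta> \<le> 1" "0 \<le> p11" "p11 \<le> 1" "0 \<le> p112" "p112 \<le> 1"
    "measure_pmf.prob J {bb. fst bb} = p112"
  shows "measure_pmf.expectation (aoi_step lam \<delta> p11 p22 J U (Q,B,A)) (\<lambda>s. real (fst s)^2)
     \<le> real Q ^ 2 + 1 + 2 * real Q * (lam - succ1 p11 p112 U)"
  apply (simp add: aoi_step_def Let_def exp_bind_fin fin_bb fin_b assms)
  apply (simp add: succ_fst_exp[OF assms(5,6,9), where h="\<lambda>b. (real (Q - ind b) + real (ind True))^2"]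
    succ_fst_exp[OF assms(5,6,9), where h="\<lambda>b. (real (Q - ind b) + real (ind False))^2"])
  using qbound succ1_range assms by blast

lemma aoi_A:
  assumes "0 \<le> lam" "lam \<le> 1" "0 \<le> \<delta>" "\<delta> \<le> 1" "0 \<le> p22" "p22 \<le> 1" 
    "measure_pmf.prob J {bb. snd bb} = p212"
  shows "measure_pmf.expectation (aoi_step lam \<delta> p11 p22 J U (Q,B,A)) (\<lambda>s. real (snd (snd s)))
     = real A + 1 - succ2 p22 p212 U * (if 0 < B then 1 else 0) * real A"
proof (cases "0 < B")
  case True
  then show ?thesis
  apply (simp add: aoi_step_def Let_def exp_bind_fin fin_bb fin_b assms)
  apply (simp add: succ_snd_exp[OF assms(5,6,7), where h="\<lambda>b. real (if b then 1 else A + 1)"])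
  apply (simp add: algebra_simps)
  done
next
  case False
  then show ?thesis
  by (simp add: aoi_step_def Let_def exp_bind_fin fin_bb fin_b assms)
qed


lemma peak_Q2:
  assumes "0 \<le> lam" "lam \<le> 1" "0 \<le> \<delta>" "\<delta> \<le> 1" "0 \<le> p11" "p11 \<le> 1" "0 \<le> p112" "p112 \<le> 1"
    "measure_pmf.prob J {bb. fst bb} = p112"
  shows "measure_pmf.expectation (peak_step amax V lam \<delta> p11 p22 J U (Q,B,Z)) (\<lambda>s. real (fst s)^2)
     \<le> real Q ^ 2 + 1 + 2 * real Q * (lam - succ1 p11 p112 U)"
  apply (simp add: peak_step_def Let_def exp_bind_fin fin_bb fin_b assms)
  apply (simp add: succ_fst_exp[OF assms(5,6,9), where h="\<lambda>b. (real (Q - ind b) + real (ind True))^2"]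
    succ_fst_exp[OF assms(5,6,9), where h="\<lambda>b. (real (Q - ind b) + real (ind False))^2"])
  using qbound succ1_range assms by blast

lemma peak_Z:
  assumes "s' \<in> set_pmf (peak_step amax V lam \<delta> p11 p22 J U (Q,B,Z))"
    "0 \<le> amax" "0 \<le> V" "Z \<le> V + amax"
  shows "0 \<le> snd (snd s') \<and> snd (snd s') \<le> V + amax"
  using assms by (auto simp: peak_step_def Let_def)

lemma lift:
  fixes f g :: "'a \<Rightarrow> real"
  assumes "finite (set_pmf D)" "\<And>s. s \<in> set_pmf D \<Longrightarrow> finite (set_pmf (K s))"
    "\<And>s. s \<in> set_pmf D \<Longrightarrow> measure_pmf.expectation (K s) f \<le> g s"
  shows "measure_pmf.expectation (bind_pmf D K) f \<le> measure_pmf.expectation D g"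
proof -
  have "measure_pmf.expectation (bind_pmf D K) f = measure_pmf.expectation D (\<lambda>x. measure_pmf.expectation (K x) f)"
    by (rule exp_bind_fin[OF assms(1,2)])
  also have "\<dots> \<le> measure_pmf.expectation D g"
    by (rule integral_mono_AE) (auto simp: integrable_measure_pmf_finite assms AE_measure_pmf_iff)
  finally show ?thesis .
qed

lemma fin_aoi_dist: "finite (set_pmf (aoi_dist lam \<delta> p11 p22 J pol A0 t))"
  by (induction t) (auto simp: fin_aoi_step)

lemma fin_peak_dist: "finite (set_pmf (peak_dist amax V lam \<delta> p11 p22 J pol t))"
  by (induction t) (auto simp: fin_peak_step)

lemma peak_dist_Z:
  assumes "0 \<le> amax" "0 \<le> V"
  shows "s \<in> set_pmf (peak_dist amax V lam \<delta> p11 p22 J pol t) \<Longrightarrow> 0 \<le> snd (snd s) \<and> snd (snd s) \<le> V + amax"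
proof (induction t arbitrary: s)
  case 0
  then show ?case using assms by simp
next
  case (Suc t)
  then obtain x where x: "x \<in> set_pmf (peak_dist amax V lam \<delta> p11 p22 J pol t)"
    and s: "s \<in> set_pmf (peak_step amax V lam \<delta> p11 p22 J (pol t (peak_obs x)) x)" by auto
  obtain Q B Z where xe: "x = (Q, B, Z)" by (cases x) auto
  show ?case using peak_Z[of s, OF s[unfolded xe] assms] Suc.IH[OF x] xe by simp
qed

lemma telescope:
  fixes L q :: "nat \<Rightarrow> real"
  assumes "\<And>t. L (Suc t) \<le> L t + c - 2 * e * q t"
  shows "L t \<le> L 0 + real t * c - 2 * e * (\<Sum>\<tau><t. q \<tau>)"
proof (induction t)
  case 0 then show ?case by simp
next
  case (Suc t)
  then show ?case using assms[of t] by (simp add: algebra_simps)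
qed

lemma limsup_bound:
  fixes x :: "nat \<Rightarrow> real"
  assumes "\<And>t. t \<ge> 1 \<Longrightarrow> x t \<le> b + d / real t"
  shows "limsup (\<lambda>t. ereal (x t)) \<le> ereal b"
proof -
  have "(\<lambda>t. b + d / real t) \<longlonglongrightarrow> b + 0"
    by (intro tendsto_add tendsto_const tendsto_divide_0[OF tendsto_const] filterlim_at_top_imp_at_infinity[OF filterlim_real_sequentially])
  then have "(\<lambda>t. ereal (b + d / real t)) \<longlonglongrightarrow> ereal b" by simp
  then have l: "limsup (\<lambda>t. ereal (b + d / real t)) = ereal b"
    by (simp add: lim_imp_Limsup)
  have "limsup (\<lambda>t. ereal (x t)) \<le> limsup (\<lambda>t. ereal (b + d / real t))"
    by (rule Limsup_mono) (use assms in \<open>auto simp: eventually_sequentially\<close>)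
  then show ?thesis using l by simp
qed

lemma avg_bound:
  fixes L q :: "nat \<Rightarrow> real"
  assumes "\<And>t. L (Suc t) \<le> L t + c - 2 * e * q t" "\<And>t. 0 \<le> L t" "\<And>t. 0 \<le> q t"
    "0 < \<epsilon>" "\<epsilon> \<le> e" "c / (2 * \<epsilon>) \<le> b"
  shows "limsup (\<lambda>t. ereal ((\<Sum>\<tau><t. q \<tau>) / real t)) \<le> ereal b"
proof (rule limsup_bound[where d = "L 0 / (2 * \<epsilon>)"])
  fix t :: nat assume t: "1 \<le> t"
  have "0 \<le> (\<Sum>\<tau><t. q \<tau>)" using assms(3) by (simp add: sum_nonneg)
  then have "2 * \<epsilon> * (\<Sum>\<tau><t. q \<tau>) \<le> 2 * e * (\<Sum>\<tau><t. q \<tau>)"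
    using assms(5) by (intro mult_right_mono) auto
  moreover have "L t \<le> L 0 + real t * c - 2 * e * (\<Sum>\<tau><t. q \<tau>)"
    by (rule telescope[of L c e q, OF assms(1)])
  ultimately have "2 * \<epsilon> * (\<Sum>\<tau><t. q \<tau>) \<le> L 0 + real t * c" using assms(2)[of t] by linarith
  then have "(\<Sum>\<tau><t. q \<tau>) \<le> (L 0 + real t * c) / (2 * \<epsilon>)"
    using assms(4) by (simp add: field_simps)
  then have "(\<Sum>\<tau><t. q \<tau>) / real t \<le> (L 0 + real t * c) / (2 * \<epsilon>) / real t"
    using t by (intro divide_right_mono) auto
  also have "\<dots> = c / (2 * \<epsilon>) + L 0 / (2 * \<epsilon>) / real t"
    using t assms(4) by (simp add: field_simps)
  finally show "(\<Sum>\<tau><t. q \<tau>) / real t \<le> b + L 0 / (2 * \<epsilon>) / real t" using assms(6) by linarith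
qed


lemma aoi_part:
  fixes lam \<delta> p11 p22 p112 p212 V \<epsilon> :: real
    and J :: "(bool \<times> bool) pmf"
  assumes "0 \<le> lam" and "lam < p11" and "p11 \<le> 1"
    and "0 \<le> \<delta>" and "\<delta> \<le> 1"
    and "0 \<le> p22" and "p22 \<le> 1"
    and "0 \<le> p112" and "p112 \<le> 1"
    and "0 \<le> p212" and "p212 \<le> 1"
    and J1: "measure_pmf.prob J {bb. fst bb} = p112"
    and J2: "measure_pmf.prob J {bb. snd bb} = p212"
    and "V > 0"
    and "0 < \<epsilon>" and "\<epsilon> \<le> min (p11 - lam) (\<delta> * p212)"
    and opt: "\<forall>t obs U. aoi_obj V p11 p22 p112 p212 obs U
                     \<le> aoi_obj V p11 p22 p112 p212 obs (pol t obs)"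
  shows "limsup (\<lambda>t. ereal ((\<Sum>\<tau><t. EQ (aoi_dist lam \<delta> p11 p22 J pol A0 \<tau>)) / real t))
          \<le> ereal (((lam\<^sup>2 + 1) / 2 + V) / \<epsilon>)"
proof -
  define D where "D t = aoi_dist lam \<delta> p11 p22 J pol A0 t" for t
  define f where "f = (\<lambda>s::nat\<times>nat\<times>nat. real (fst s)^2 + 2 * V * real (snd (snd s)))"
  define L where "L t = measure_pmf.expectation (D t) f" for t
  define q where "q t = EQ (D t)" for t
  define c where "c = 1 + 2 * V"
  define g where "g = (\<lambda>s::nat\<times>nat\<times>nat. f s + c - 2 * (p11 - lam) * real (fst s))"
  have lam1: "lam \<le> 1" using assms by simp
  have step: "L (Suc t) \<le> L t + c - 2 * (p11 - lam) * q t" for t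
  proof -
    have "L (Suc t) = measure_pmf.expectation (bind_pmf (D t) (\<lambda>s. aoi_step lam \<delta> p11 p22 J (pol t (aoi_obs s)) s)) f"
      by (simp add: L_def D_def)
    also have "\<dots> \<le> measure_pmf.expectation (D t) g"
    proof (rule lift)
      show "finite (set_pmf (D t))" by (simp add: D_def fin_aoi_dist)
      fix s assume "s \<in> set_pmf (D t)"
      show "finite (set_pmf (aoi_step lam \<delta> p11 p22 J (pol t (aoi_obs s)) s))" by (rule fin_aoi_step)
      obtain Q B A where se: "s = (Q, B, A)" by (cases s) auto
      define U where "U = pol t (aoi_obs s)"
      define P1 where "P1 = succ1 p11 p112 U"
      define P2 where "P2 = succ2 p22 p212 U"
      define H :: real where "H = (if 0 < B then 1 else 0)"
      have o: "aoi_obj V p11 p22 p112 p212 (Q, A, 0 < B) (True, False) \<le> aoi_obj V p11 p22 p112 p212 (Q, A, 0 < B) U"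
        using opt unfolding U_def se aoi_obs_def by auto
      then have o': "p11 * real Q \<le> P1 * real Q + V * P2 * H * real A"
        by (simp add: aoi_obj_def succ1_def succ2_def P1_def P2_def H_def)
      have eQ: "measure_pmf.expectation (aoi_step lam \<delta> p11 p22 J U (Q,B,A)) (\<lambda>s. real (fst s)^2)
          \<le> real Q ^ 2 + 1 + 2 * real Q * (lam - P1)"
        unfolding P1_def by (rule aoi_Q2) (use assms lam1 in auto)
      have eA: "measure_pmf.expectation (aoi_step lam \<delta> p11 p22 J U (Q,B,A)) (\<lambda>s. real (snd (snd s)))
          = real A + 1 - P2 * H * real A"
        unfolding P2_def H_def by (rule aoi_A) (use assms lam1 in auto)
      have "measure_pmf.expectation (aoi_step lam \<delta> p11 p22 J U (Q,B,A)) f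
         = measure_pmf.expectation (aoi_step lam \<delta> p11 p22 J U (Q,B,A)) (\<lambda>s. real (fst s)^2)
           + 2 * V * measure_pmf.expectation (aoi_step lam \<delta> p11 p22 J U (Q,B,A)) (\<lambda>s. real (snd (snd s)))"
        unfolding f_def
        by (simp add: integrable_measure_pmf_finite fin_aoi_step)
      also have "\<dots> \<le> real Q ^ 2 + 1 + 2 * real Q * (lam - P1) + 2 * V * (real A + 1 - P2 * H * real A)"
        using eQ eA by simp
      also have "\<dots> \<le> g s"
        using o' unfolding g_def f_def c_def se by (simp add: algebra_simps)
      finally show "measure_pmf.expectation (aoi_step lam \<delta> p11 p22 J (pol t (aoi_obs s)) s) f \<le> g s"
        unfolding U_def se .
    qed
    also have "\<dots> = L t + c - 2 * (p11 - lam) * q t"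
      unfolding g_def L_def q_def EQ_def
      by (simp add: integrable_measure_pmf_finite D_def fin_aoi_dist)
    finally show ?thesis .
  qed
  have Lnn: "0 \<le> L t" for t
    unfolding L_def f_def using assms by (intro integral_nonneg_AE) auto
  have qnn: "0 \<le> q t" for t
    unfolding q_def EQ_def by (intro integral_nonneg_AE) auto
  have cb: "c / (2 * \<epsilon>) \<le> ((lam\<^sup>2 + 1) / 2 + V) / \<epsilon>"
  proof -
    have "c / (2 * \<epsilon>) = (1/2 + V) / \<epsilon>" unfolding c_def using assms by (simp add: field_simps)
    also have "\<dots> \<le> ((lam\<^sup>2 + 1) / 2 + V) / \<epsilon>"
      using assms by (intro divide_right_mono) auto
    finally show ?thesis .
  qed
  have "limsup (\<lambda>t. ereal ((\<Sum>\<tau><t. q \<tau>) / real t)) \<le> ereal (((lam\<^sup>2 + 1) / 2 + V) / \<epsilon>)"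
    by (rule avg_bound[of L c "p11 - lam" q \<epsilon>, OF step Lnn qnn _ _ cb]) (use assms in auto)
  then show ?thesis unfolding q_def D_def .
qed


lemma peak_part:
  fixes lam \<delta> p11 p22 p112 p212 V \<epsilon> :: real
    and J :: "(bool \<times> bool) pmf"
  assumes "0 \<le> lam" and "lam < p11" and "p11 \<le> 1"
    and "0 \<le> \<delta>" and "\<delta> \<le> 1"
    and "0 \<le> p22" and "p22 \<le> 1"
    and "0 \<le> p112" and "p112 \<le> 1"
    and "0 \<le> p212" and "p212 \<le> 1"
    and J1: "measure_pmf.prob J {bb. fst bb} = p112"
    and J2: "measure_pmf.prob J {bb. snd bb} = p212"
    and "V > 0"
    and "0 < \<epsilon>" and "\<epsilon> \<le> min (p11 - lam) (\<delta> * p212)"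
    and am: "0 \<le> amax"
    and opt: "\<forall>t obs U. peak_obj p11 p22 p112 p212 obs U
                     \<le> peak_obj p11 p22 p112 p212 obs (pol t obs)"
  shows "limsup (\<lambda>t. ereal ((\<Sum>\<tau><t. EQ (peak_dist amax V lam \<delta> p11 p22 J pol \<tau>)) / real t))
          \<le> ereal (((amax\<^sup>2 + lam\<^sup>2 + 2) / 2 + V) / \<epsilon>)"
proof -
  define D where "D t = peak_dist amax V lam \<delta> p11 p22 J pol t" for t
  define f where "f = (\<lambda>s::nat\<times>nat\<times>real. real (fst s)^2)"
  define L where "L t = measure_pmf.expectation (D t) f" for t
  define q where "q t = EQ (D t)" for t
  define c where "c = 1 + 2 * (V + amax)"
  define g where "g = (\<lambda>s::nat\<times>nat\<times>real. f s + c - 2 * (p11 - lam) * real (fst s))"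
  have lam1: "lam \<le> 1" using assms by simp
  have step: "L (Suc t) \<le> L t + c - 2 * (p11 - lam) * q t" for t
  proof -
    have "L (Suc t) = measure_pmf.expectation (bind_pmf (D t) (\<lambda>s. peak_step amax V lam \<delta> p11 p22 J (pol t (peak_obs s)) s)) f"
      by (simp add: L_def D_def)
    also have "\<dots> \<le> measure_pmf.expectation (D t) g"
    proof (rule lift)
      show "finite (set_pmf (D t))" by (simp add: D_def fin_peak_dist)
      fix s assume sD: "s \<in> set_pmf (D t)"
      show "finite (set_pmf (peak_step amax V lam \<delta> p11 p22 J (pol t (peak_obs s)) s))" by (rule fin_peak_step)
      obtain Q B Z where se: "s = (Q, B, Z)" by (cases s) auto
      have Zb: "0 \<le> Z" "Z \<le> V + amax"
      proof -
        have Vn: "0 \<le> V" using assms by simp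
        have "s \<in> set_pmf (peak_dist amax V lam \<delta> p11 p22 J pol t)" using sD by (simp add: D_def)
        from peak_dist_Z[OF am Vn this] show "0 \<le> Z" "Z \<le> V + amax" unfolding se by auto
      qed
      define U where "U = pol t (peak_obs s)"
      define P1 where "P1 = succ1 p11 p112 U"
      define P2 where "P2 = succ2 p22 p212 U"
      define H :: real where "H = (if 0 < B then 1 else 0)"
      have o: "peak_obj p11 p22 p112 p212 (Q, Z, 0 < B) (True, False) \<le> peak_obj p11 p22 p112 p212 (Q, Z, 0 < B) U"
        using opt unfolding U_def se peak_obs_def by auto
      then have o': "p11 * real Q \<le> P1 * real Q + Z * H * P2"
        by (simp add: peak_obj_def succ1_def succ2_def P1_def P2_def H_def algebra_simps)
      have P2r: "0 \<le> P2" "P2 \<le> 1" using succ2_range[of p22 p212 U] assms unfolding P2_def by auto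
      have "Z * H * P2 \<le> V + amax"
      proof -
        have "Z * H * P2 \<le> Z * 1 * 1"
          using Zb P2r by (intro mult_mono) (auto simp: H_def)
        then show ?thesis using Zb by simp
      qed
      have eQ: "measure_pmf.expectation (peak_step amax V lam \<delta> p11 p22 J U (Q,B,Z)) f
          \<le> real Q ^ 2 + 1 + 2 * real Q * (lam - P1)"
        unfolding P1_def f_def by (rule peak_Q2) (use assms lam1 in auto)
      also have "\<dots> \<le> g s"
        using o' \<open>Z * H * P2 \<le> V + amax\<close> unfolding g_def f_def c_def se by (simp add: algebra_simps)
      finally show "measure_pmf.expectation (peak_step amax V lam \<delta> p11 p22 J (pol t (peak_obs s)) s) f \<le> g s"
        unfolding U_def se .
    qed
    also have "\<dots> = L t + c - 2 * (p11 - lam) * q t"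
      unfolding g_def L_def q_def EQ_def
      by (simp add: integrable_measure_pmf_finite D_def fin_peak_dist)
    finally show ?thesis .
  qed
  have Lnn: "0 \<le> L t" for t
    unfolding L_def f_def using assms by (intro integral_nonneg_AE) auto
  have qnn: "0 \<le> q t" for t
    unfolding q_def EQ_def by (intro integral_nonneg_AE) auto
  have cb: "c / (2 * \<epsilon>) \<le> ((amax\<^sup>2 + lam\<^sup>2 + 2) / 2 + V) / \<epsilon>"
  proof -
    have "c / (2 * \<epsilon>) = (1/2 + amax + V) / \<epsilon>" unfolding c_def using assms by (simp add: field_simps)
    also have "\<dots> \<le> ((amax\<^sup>2 + lam\<^sup>2 + 2) / 2 + V) / \<epsilon>"
    proof (intro divide_right_mono)
      have "0 \<le> (amax - 1)^2" by simp
      then have a: "2*amax \<le> 1 + amax*amax" by (simp add: power2_eq_square algebra_simps)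
      have b: "0 \<le> lam*lam" by simp
      have c: "(amax*amax + lam*lam + 2)/2 = amax*amax/2 + lam*lam/2 + 1" by simp
      show "1/2 + amax + V \<le> (amax\<^sup>2 + lam\<^sup>2 + 2) / 2 + V"
        using a b c unfolding power2_eq_square by linarith
    qed (use assms in auto)
    finally show ?thesis .
  qed
  have "limsup (\<lambda>t. ereal ((\<Sum>\<tau><t. q \<tau>) / real t)) \<le> ereal (((amax\<^sup>2 + lam\<^sup>2 + 2) / 2 + V) / \<epsilon>)"
    by (rule avg_bound[of L c "p11 - lam" q \<epsilon>, OF step Lnn qnn _ _ cb]) (use assms in auto)
  then show ?thesis unfolding q_def D_def .
qed


theorem lemma4:
  fixes lam \<delta> p11 p22 p112 p212 V \<epsilon> :: real
    and J :: "(bool \<times> bool) pmf"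
  assumes "0 \<le> lam" and "lam < p11" and "p11 \<le> 1"
    and "0 \<le> \<delta>" and "\<delta> \<le> 1"
    and "0 \<le> p22" and "p22 \<le> 1"
    and "0 \<le> p112" and "p112 \<le> 1"
    and "0 \<le> p212" and "p212 \<le> 1"
    and "measure_pmf.prob J {bb. fst bb} = p112"
    and "measure_pmf.prob J {bb. snd bb} = p212"
    and "V > 0"
    and "0 < \<epsilon>" and "\<epsilon> \<le> min (p11 - lam) (\<delta> * p212)"
  shows
    "(\<forall>(pol :: nat \<Rightarrow> nat \<times> nat \<times> bool \<Rightarrow> decision) (A0 :: nat).
        (\<forall>t obs U. aoi_obj V p11 p22 p112 p212 obs U
                     \<le> aoi_obj V p11 p22 p112 p212 obs (pol t obs)) \<longrightarrow>
        limsup (\<lambda>t. ereal ((\<Sum>\<tau><t. EQ (aoi_dist lam \<delta> p11 p22 J pol A0 \<tau>)) / real t))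
          \<le> ereal (((lam\<^sup>2 + 1) / 2 + V) / \<epsilon>))
   \<and> (\<exists>\<alpha>0. \<forall>amax \<ge> \<alpha>0. \<forall>(pol :: nat \<Rightarrow> nat \<times> real \<times> bool \<Rightarrow> decision).
        (\<forall>t obs U. peak_obj p11 p22 p112 p212 obs U
                     \<le> peak_obj p11 p22 p112 p212 obs (pol t obs)) \<longrightarrow>
        limsup (\<lambda>t. ereal ((\<Sum>\<tau><t. EQ (peak_dist amax V lam \<delta> p11 p22 J pol \<tau>)) / real t))
          \<le> ereal (((amax\<^sup>2 + lam\<^sup>2 + 2) / 2 + V) / \<epsilon>))"
  proof (intro conjI allI impI)
  fix pol :: "nat \<Rightarrow> nat \<times> nat \<times> bool \<Rightarrow> decision" and A0 :: nat
  assume "\<forall>t obs U. aoi_obj V p11 p22 p112 p212 obs U \<le> aoi_obj V p11 p22 p112 p212 obs (pol t obs)"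
  then show "limsup (\<lambda>t. ereal ((\<Sum>\<tau><t. EQ (aoi_dist lam \<delta> p11 p22 J pol A0 \<tau>)) / real t))
          \<le> ereal (((lam\<^sup>2 + 1) / 2 + V) / \<epsilon>)"
    by (rule aoi_part[OF assms])
next
  show "\<exists>\<alpha>0. \<forall>amax \<ge> \<alpha>0. \<forall>(pol :: nat \<Rightarrow> nat \<times> real \<times> bool \<Rightarrow> decision).
        (\<forall>t obs U. peak_obj p11 p22 p112 p212 obs U
                     \<le> peak_obj p11 p22 p112 p212 obs (pol t obs)) \<longrightarrow>
        limsup (\<lambda>t. ereal ((\<Sum>\<tau><t. EQ (peak_dist amax V lam \<delta> p11 p22 J pol \<tau>)) / real t))
          \<le> ereal (((amax\<^sup>2 + lam\<^sup>2 + 2) / 2 + V) / \<epsilon>)"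
    using peak_part[OF assms] by blast
qed

end
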